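(* Let $K$ be a field, $X$ a finite connected poset, $m$ a positive integer, and $I\subseteq J_m$ an ideal of $I(X,K)$ such that $\dim_K\big(I/(I\cap J_{m+1})\big)=1$. Then there exists a unique $e_{xy}\in J_m\setminus J_{m+1}$ such that every $f\in I\setminus J_{m+1}$ is of the form $f=f(x,y)e_{xy}+j_{xy}$ with $j_{xy}\in J_{m+1}$.
   Context: $I(X,K)$ is the incidence algebra: functions $f:X\times X\to K$ with $f(x,y)=0$ unless $x\le y$, product $(fg)(x,y)=\sum_{x\le t\le y}f(x,t)g(t,y)$; $e_{xy}$ ($x\le y$) is the function equal to $1$ at $(x,y)$ and $0$ elsewhere. $[f,g]=fg-gf$; $J_1=\mathrm{span}_K\{[f,g]: f,g\in I(X,K)\}$ and $J_k=\mathrm{span}_K\{[f,g]: f\in J_1, g\in J_{k-1}\}$ for $k\ge2$ (one has $J_k=\mathrm{span}_K\{e_{xy}: l(\lfloor x,y\rfloor)\ge k\}$, where $l(\lfloor x,y\rfloor)$ is the maximal length of a chain in $\{z:x\le z\le y\}$). Connected means any two elements are joined by a sequence in which consecutive elements are in a covering relation. *)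

theory Defs
  imports Complex_Main "HOL-Library.Function_Algebras"
begin

text \<open>The poset X is the finite type 'a with its order; the field K is the type 'k.
  Addition / zero / negation are pointwise (Function_Algebras); the convolution product
  is the separate constant inc_mult (the pointwise product on functions is NOT used).\<close>

definition inc_alg :: "('a::{finite,order} \<Rightarrow> 'a \<Rightarrow> 'k::field) set" where
  "inc_alg = {f. \<forall>x y. \<not> x \<le> y \<longrightarrow> f x y = 0}"

definition inc_mult :: "('a::{finite,order} \<Rightarrow> 'a \<Rightarrow> 'k::field) \<Rightarrow> ('a \<Rightarrow> 'a \<Rightarrow> 'k) \<Rightarrow> ('a \<Rightarrow> 'a \<Rightarrow> 'k)" where
  "inc_mult f g = (\<lambda>x y. \<Sum>t\<in>{t. x \<le> t \<and> t \<le> y}. f x t * g t y)"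

definition inc_scale :: "'k::field \<Rightarrow> ('a \<Rightarrow> 'a \<Rightarrow> 'k) \<Rightarrow> ('a \<Rightarrow> 'a \<Rightarrow> 'k)" where
  "inc_scale c f = (\<lambda>x y. c * f x y)"

definition commutator :: "('a::{finite,order} \<Rightarrow> 'a \<Rightarrow> 'k::field) \<Rightarrow> ('a \<Rightarrow> 'a \<Rightarrow> 'k) \<Rightarrow> ('a \<Rightarrow> 'a \<Rightarrow> 'k)" where
  "commutator f g = inc_mult f g - inc_mult g f"

definition kspan :: "('a::{finite,order} \<Rightarrow> 'a \<Rightarrow> 'k::field) set \<Rightarrow> ('a \<Rightarrow> 'a \<Rightarrow> 'k) set" where
  "kspan S = module.span inc_scale S"

definition kdim :: "('a::{finite,order} \<Rightarrow> 'a \<Rightarrow> 'k::field) set \<Rightarrow> nat" where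
  "kdim S = vector_space.dim inc_scale S"

text \<open>J_1 = span of commutators; J_(k+1) = span{[f,g] : f in J_1, g in J_k}.
  J 0 is the whole incidence algebra (only J_k with k >= 1 is used).\<close>
fun Jideal :: "nat \<Rightarrow> ('a::{finite,order} \<Rightarrow> 'a \<Rightarrow> 'k::field) set" where
  "Jideal 0 = inc_alg"
| "Jideal (Suc 0) = kspan {commutator f g | f g. f \<in> inc_alg \<and> g \<in> inc_alg}"
| "Jideal (Suc (Suc k)) = kspan {commutator f g | f g. f \<in> Jideal (Suc 0) \<and> g \<in> Jideal (Suc k)}"

definition e_elem :: "'a::{finite,order} \<Rightarrow> 'a \<Rightarrow> ('a \<Rightarrow> 'a \<Rightarrow> 'k::field)" where
  "e_elem x y = (\<lambda>u v. if u = x \<and> v = y then 1 else 0)"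

definition is_inc_ideal :: "('a::{finite,order} \<Rightarrow> 'a \<Rightarrow> 'k::field) set \<Rightarrow> bool" where
  "is_inc_ideal I \<longleftrightarrow> I \<subseteq> inc_alg \<and> 0 \<in> I
     \<and> (\<forall>f\<in>I. \<forall>g\<in>I. f + g \<in> I)
     \<and> (\<forall>c. \<forall>f\<in>I. inc_scale c f \<in> I)
     \<and> (\<forall>f\<in>I. \<forall>a\<in>inc_alg. inc_mult a f \<in> I \<and> inc_mult f a \<in> I)"

definition covers :: "'a::order \<Rightarrow> 'a \<Rightarrow> bool" where
  "covers x y \<longleftrightarrow> x < y \<and> \<not> (\<exists>z. x < z \<and> z < y)"

definition poset_connected :: "'a::order itself \<Rightarrow> bool" where
  "poset_connected _ \<longleftrightarrow> (\<forall>x y::'a. (\<lambda>u v. covers u v \<or> covers v u)\<^sup>*\<^sup>* x y)"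

end

theory Submission
  imports Defs
begin

lemma vs_inc: "vector_space (inc_scale :: 'k::field \<Rightarrow> ('a \<Rightarrow> 'a \<Rightarrow> 'k) \<Rightarrow> _)"
  by unfold_locales (auto simp: inc_scale_def fun_eq_iff algebra_simps)

interpretation V: vector_space "inc_scale :: 'k::field \<Rightarrow> ('a \<Rightarrow> 'a \<Rightarrow> 'k) \<Rightarrow> _"
  by (rule vs_inc)

lemma fun_sum_apply: "sum f A x = (\<Sum>a\<in>A. f a x)"
  by (induct A rule: infinite_finite_induct) auto

definition bas :: "'a \<Rightarrow> 'a \<Rightarrow> ('a \<Rightarrow> 'a \<Rightarrow> 'k::field)" where
  "bas x y = (\<lambda>u v. if u = x \<and> v = y then 1 else 0)"

lemma sum_bas: "(f :: 'a::finite \<Rightarrow> 'a \<Rightarrow> 'k::field) = (\<Sum>p\<in>UNIV. inc_scale (f (fst p) (snd p)) (bas (fst p) (snd p)))"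
proof -
  have "(\<Sum>p\<in>UNIV. inc_scale (f (fst p) (snd p)) (bas (fst p) (snd p))) u v = f u v" for u v
  proof -
    have "(\<Sum>p\<in>UNIV. inc_scale (f (fst p) (snd p)) (bas (fst p) (snd p))) u v
       = (\<Sum>p\<in>UNIV. inc_scale (f (fst p) (snd p)) (bas (fst p) (snd p)) u v)"
      by (simp add: fun_sum_apply)
    also have "\<dots> = (\<Sum>p\<in>UNIV. (if p = (u,v) then f u v else 0))"
      by (rule sum.cong) (auto simp: inc_scale_def bas_def)
    also have "\<dots> = f u v" by simp
    finally show ?thesis .
  qed
  then show ?thesis by (simp add: fun_eq_iff)
qed

lemma fdvs: "finite_dimensional_vector_space (inc_scale :: 'k::field \<Rightarrow> ('a::finite \<Rightarrow> 'a \<Rightarrow> 'k) \<Rightarrow> _)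
   (range (\<lambda>p. bas (fst p) (snd p)))"
proof (unfold_locales)
  show "finite (range (\<lambda>p. bas (fst p) (snd p) :: 'a \<Rightarrow> 'a \<Rightarrow> 'k))" by simp
  show "V.span (range (\<lambda>p. bas (fst p) (snd p) :: 'a \<Rightarrow> 'a \<Rightarrow> 'k)) = UNIV"
  proof (auto)
    fix f :: "'a \<Rightarrow> 'a \<Rightarrow> 'k"
    have "(\<Sum>p\<in>UNIV. inc_scale (f (fst p) (snd p)) (bas (fst p) (snd p))) \<in> V.span (range (\<lambda>p. bas (fst p) (snd p)))"
      by (intro V.span_sum V.span_scale V.span_base) auto
    then show "f \<in> V.span (range (\<lambda>p. bas (fst p) (snd p)))" using sum_bas[of f] by simp
  qed
  show "V.independent (range (\<lambda>p. bas (fst p) (snd p) :: 'a \<Rightarrow> 'a \<Rightarrow> 'k))"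
  proof -
    let ?R = "range (\<lambda>p. bas (fst p) (snd p) :: 'a \<Rightarrow> 'a \<Rightarrow> 'k)"
    have fin: "finite ?R" by simp
    have "(\<Sum>v\<in>?R. inc_scale (c v) v) = 0 \<longrightarrow> (\<forall>v\<in>?R. c v = 0)" for c
    proof (intro impI ballI)
    fix v
    assume h: "(\<Sum>v\<in>?R. inc_scale (c v) v) = 0"
      and v: "v \<in> ?R"
    then obtain x y where vxy: "v = bas x y" by auto
    have "(\<Sum>w\<in>?R. inc_scale (c w) w) x y = (\<Sum>w\<in>?R. if w = v then c v else (0::'k))"
    proof -
      have "(\<Sum>w\<in>?R. inc_scale (c w) w) x y = (\<Sum>w\<in>?R. inc_scale (c w) w x y)"
        by (simp add: fun_sum_apply)
      also have "\<dots> = (\<Sum>w\<in>?R. if w = v then c v else (0::'k))"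
      proof (rule sum.cong)
      fix w assume "w \<in> ?R"
      then obtain a b where wab: "w = bas a b" by auto
      show "inc_scale (c w) w x y = (if w = v then c v else 0)"
      proof (cases "w = v")
        case True then show ?thesis using vxy by (simp add: inc_scale_def bas_def)
      next
        case False
        then have "\<not> (a = x \<and> b = y)" using wab vxy by auto
        then show ?thesis using False wab by (auto simp: inc_scale_def bas_def)
      qed
      qed simp
      finally show ?thesis .
    qed
    also have "\<dots> = c v" using v by simp
    finally show "c v = 0" using h by simp
    qed
    then show ?thesis using V.dependent_finite[OF fin] by blast
  qed
qed

interpretation F: finite_dimensional_vector_space "inc_scale :: 'k::field \<Rightarrow> ('a::finite \<Rightarrow> 'a \<Rightarrow> 'k) \<Rightarrow> _"
   "range (\<lambda>p. bas (fst p) (snd p))"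
  by (rule fdvs)

fun ge :: "nat \<Rightarrow> 'a::order \<Rightarrow> 'a \<Rightarrow> bool" where
  "ge 0 x y = (x \<le> y)"
| "ge (Suc k) x y = (\<exists>z. x < z \<and> ge k z y)"

lemma ge_le: "ge k x y \<Longrightarrow> x \<le> y"
  by (induct k arbitrary: x) (auto, meson less_imp_le order.trans)

lemma ge_mono_left: "x \<le> t \<Longrightarrow> ge b t y \<Longrightarrow> ge b x y"
  by (cases b) (auto intro: order.trans le_less_trans)

lemma ge_trans: "ge a x t \<Longrightarrow> ge b t y \<Longrightarrow> ge (a+b) x y"
  by (induct a arbitrary: x) (auto intro: ge_mono_left)

definition S :: "nat \<Rightarrow> ('a::order \<Rightarrow> 'a \<Rightarrow> 'k::field) set" where
  "S k = {f. \<forall>u v. f u v \<noteq> 0 \<longrightarrow> ge k u v}"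

lemma S_subspace: "V.subspace (S k)"
  unfolding V.subspace_def S_def by (auto simp: inc_scale_def) (metis add_0)

lemma S_diff: "f \<in> S k \<Longrightarrow> g \<in> S k \<Longrightarrow> f - g \<in> S k"
  unfolding S_def by auto (metis)

lemma mult_S:
  assumes "f \<in> S a" "g \<in> S b"
  shows "inc_mult (f :: 'a::{finite,order} \<Rightarrow> 'a \<Rightarrow> 'k::field) g \<in> S (a+b)"
  unfolding S_def
proof (clarify)
  fix u v assume h: "inc_mult f g u v \<noteq> 0"
  then obtain t where "t \<in> {t. u \<le> t \<and> t \<le> v}" "f u t * g t v \<noteq> 0"
    unfolding inc_mult_def by (meson sum.neutral)
  then have "ge a u t" "ge b t v" using assms unfolding S_def by auto
  then show "ge (a+b) u v" by (rule ge_trans)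
qed

lemma comm_S:
  assumes "f \<in> S a" "g \<in> S b"
  shows "commutator (f :: 'a::{finite,order} \<Rightarrow> 'a \<Rightarrow> 'k::field) g \<in> S (a+b)"
  unfolding commutator_def
  using S_diff mult_S[OF assms] mult_S[OF assms(2,1)] by (metis add.commute)

lemma inc_alg_S0: "inc_alg = S 0"
  unfolding inc_alg_def S_def by auto

lemma comm_S1:
  assumes "f \<in> inc_alg" "g \<in> inc_alg"
  shows "commutator (f :: 'a::{finite,order} \<Rightarrow> 'a \<Rightarrow> 'k::field) g \<in> S (Suc 0)"
proof -
  have c0: "commutator f g \<in> S 0" using comm_S[of f 0 g 0] assms inc_alg_S0 by auto
  have "commutator f g u u = 0" for u
  proof -
    have "{t. u \<le> t \<and> t \<le> u} = {u}" by auto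
    then show ?thesis unfolding commutator_def inc_mult_def by simp
  qed
  then show ?thesis using c0 unfolding S_def by (auto intro!: exI[of _ for v] simp: order.order_iff_strict)
qed

lemma J_S0: "Jideal (Suc 0) \<subseteq> (S (Suc 0) :: ('a::{finite,order} \<Rightarrow> 'a \<Rightarrow> 'k::field) set)"
  unfolding Jideal.simps kspan_def
  by (rule V.span_minimal) (auto intro: comm_S1 S_subspace)

lemma J_S: "Jideal (Suc k) \<subseteq> (S (Suc k) :: ('a::{finite,order} \<Rightarrow> 'a \<Rightarrow> 'k::field) set)"
proof (induct k)
  case 0
  show ?case by (rule J_S0)
next
  case (Suc k)
  have "commutator f g \<in> (S (Suc (Suc k)) :: ('a \<Rightarrow> 'a \<Rightarrow> 'k) set)"
    if "f \<in> Jideal (Suc 0)" "g \<in> Jideal (Suc k)" for f g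
  proof -
    have "f \<in> S (Suc 0)" using that(1) J_S0 by blast
    moreover have "g \<in> S (Suc k)" using that(2) Suc by blast
    ultimately show ?thesis using comm_S by fastforce
  qed
  then show ?case unfolding Jideal.simps kspan_def
    by (intro V.span_minimal) (auto intro: S_subspace)
qed

lemma e_mult_left: "inc_mult (e_elem a b) (g :: 'a::{finite,order} \<Rightarrow> 'a \<Rightarrow> 'k::field)
   = (\<lambda>p q. if p = a \<and> a \<le> b \<and> b \<le> q then g b q else 0)"
proof (intro ext)
  fix p q
  have "inc_mult (e_elem a b) g p q = (\<Sum>t\<in>{t. p \<le> t \<and> t \<le> q}. if t = b then (if p = a then g b q else 0) else 0)"
    unfolding inc_mult_def e_elem_def by (rule sum.cong) auto
  also have "\<dots> = (if p = a \<and> a \<le> b \<and> b \<le> q then g b q else 0)"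
    by (subst sum.delta) auto
  finally show "inc_mult (e_elem a b) g p q = (if p = a \<and> a \<le> b \<and> b \<le> q then g b q else 0)" .
qed

lemma e_mult_right: "inc_mult (g :: 'a::{finite,order} \<Rightarrow> 'a \<Rightarrow> 'k::field) (e_elem a b)
   = (\<lambda>p q. if q = b \<and> p \<le> a \<and> a \<le> b then g p a else 0)"
proof (intro ext)
  fix p q
  have "inc_mult g (e_elem a b) p q = (\<Sum>t\<in>{t. p \<le> t \<and> t \<le> q}. if t = a then (if q = b then g p a else 0) else 0)"
    unfolding inc_mult_def e_elem_def by (rule sum.cong) auto
  also have "\<dots> = (if q = b \<and> p \<le> a \<and> a \<le> b then g p a else 0)"
    by (subst sum.delta) auto
  finally show "inc_mult g (e_elem a b) p q = (if q = b \<and> p \<le> a \<and> a \<le> b then g p a else 0)" .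
qed

lemma e_comm:
  assumes "a \<le> z" "z \<le> b" "a \<noteq> b"
  shows "commutator (e_elem a z) (e_elem z b) = (e_elem a b :: 'a::{finite,order} \<Rightarrow> 'a \<Rightarrow> 'k::field)"
  unfolding commutator_def e_mult_left using assms
  by (auto simp: fun_eq_iff e_elem_def)

lemma e_inc: "a \<le> b \<Longrightarrow> e_elem a b \<in> inc_alg"
  unfolding inc_alg_def e_elem_def by auto

lemma e_in_J1: "a < b \<Longrightarrow> (e_elem a b :: 'a::{finite,order} \<Rightarrow> 'a \<Rightarrow> 'k::field) \<in> Jideal (Suc 0)"
proof -
  assume ab: "a < b"
  have "commutator (e_elem a a) (e_elem a b) = (e_elem a b :: 'a \<Rightarrow> 'a \<Rightarrow> 'k)"
    by (rule e_comm) (use ab in auto)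
  moreover have "commutator (e_elem a a) (e_elem a b) \<in> (Jideal (Suc 0) :: ('a \<Rightarrow> 'a \<Rightarrow> 'k) set)"
  proof -
    have "e_elem a a \<in> inc_alg" "e_elem a b \<in> inc_alg" using ab by (auto intro!: e_inc)
    then show ?thesis unfolding Jideal.simps kspan_def by (intro V.span_base) blast
  qed
  ultimately show ?thesis by simp
qed

lemma e_in_J: "ge (Suc k) a b \<Longrightarrow> (e_elem a b :: 'a::{finite,order} \<Rightarrow> 'a \<Rightarrow> 'k::field) \<in> Jideal (Suc k)"
proof (induct k arbitrary: a b)
  case 0
  then have ab: "a < b" by (auto intro: less_le_trans)
  then show ?case by (rule e_in_J1)
next
  case (Suc k)
  then obtain z where z: "a < z" "ge (Suc k) z b" by auto
  have zb: "z \<le> b" using ge_le[OF z(2)] .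
  have e1: "(e_elem a z :: 'a \<Rightarrow> 'a \<Rightarrow> 'k) \<in> Jideal (Suc 0)" using z(1) by (rule e_in_J1)
  have e2: "(e_elem z b :: 'a \<Rightarrow> 'a \<Rightarrow> 'k) \<in> Jideal (Suc k)" using Suc(1) z(2) by blast
  have "commutator (e_elem a z) (e_elem z b) = (e_elem a b :: 'a \<Rightarrow> 'a \<Rightarrow> 'k)"
    by (rule e_comm) (use z(1) zb in auto)
  moreover have "commutator (e_elem a z) (e_elem z b) \<in> (Jideal (Suc (Suc k)) :: ('a \<Rightarrow> 'a \<Rightarrow> 'k) set)"
    unfolding Jideal.simps(3) kspan_def using e1 e2
    by (intro V.span_base) blast
  ultimately show ?case by simp
qed

lemma e_bas: "e_elem x y = bas x y"
  unfolding e_elem_def bas_def by simp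

lemma J_subspace: "V.subspace (Jideal (Suc k) :: ('a::{finite,order} \<Rightarrow> 'a \<Rightarrow> 'k::field) set)"
  by (cases k) (simp_all add: kspan_def)

lemma J_span: "V.span (Jideal (Suc k)) = (Jideal (Suc k) :: ('a::{finite,order} \<Rightarrow> 'a \<Rightarrow> 'k::field) set)"
  using J_subspace V.span_eq_iff by blast

lemma S_in_J:
  assumes "(f :: 'a::{finite,order} \<Rightarrow> 'a \<Rightarrow> 'k::field) \<in> S (Suc k)"
  shows "f \<in> Jideal (Suc k)"
proof -
  have "(\<Sum>p\<in>UNIV. inc_scale (f (fst p) (snd p)) (e_elem (fst p) (snd p))) \<in> V.span (Jideal (Suc k) :: ('a \<Rightarrow> 'a \<Rightarrow> 'k) set)"
  proof (intro V.span_sum)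
      fix p :: "'a \<times> 'a"
      show "inc_scale (f (fst p) (snd p)) (e_elem (fst p) (snd p)) \<in> V.span (Jideal (Suc k))"
      proof (cases "f (fst p) (snd p) = 0")
        case True then show ?thesis by (simp add: V.span_zero)
      next
        case False
        then have "ge (Suc k) (fst p) (snd p)" using assms unfolding S_def by auto
        then have "e_elem (fst p) (snd p) \<in> (Jideal (Suc k) :: ('a \<Rightarrow> 'a \<Rightarrow> 'k) set)" using e_in_J by blast
        then show ?thesis by (intro V.span_scale V.span_base)
      qed
  qed
  then have "f \<in> V.span (Jideal (Suc k))" using sum_bas[of f] by (simp add: e_bas)
  then show ?thesis by (metis J_span)
qed

lemma key_e:
  assumes I: "is_inc_ideal I" and f: "f \<in> I" and xy: "x \<le> y" and nz: "f x y \<noteq> 0"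
  shows "(e_elem x y :: 'a::{finite,order} \<Rightarrow> 'a \<Rightarrow> 'k::field) \<in> I"
proof -
  have ex: "e_elem x x \<in> inc_alg" "e_elem y y \<in> inc_alg" by (auto intro: e_inc)
  have "inc_mult (e_elem x x) f \<in> I" using I f ex unfolding is_inc_ideal_def by blast
  then have h: "inc_mult (inc_mult (e_elem x x) f) (e_elem y y) \<in> I" using I ex unfolding is_inc_ideal_def by blast
  have "inc_mult (inc_mult (e_elem x x) f) (e_elem y y) = inc_scale (f x y) (e_elem x y)"
    unfolding e_mult_left e_mult_right using xy by (auto simp: fun_eq_iff inc_scale_def e_elem_def)
  with h have "inc_scale (inverse (f x y)) (inc_scale (f x y) (e_elem x y)) \<in> I"
    using I unfolding is_inc_ideal_def by metis
  then show ?thesis using nz by simp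
qed

lemma dim_contra:
  assumes I: "is_inc_ideal (I :: ('a::{finite,order} \<Rightarrow> 'a \<Rightarrow> 'k::field) set)"
    and d: "kdim I = kdim (I \<inter> Jideal (Suc m)) + 1"
    and e1: "e_elem x1 y1 \<in> I" and e2: "e_elem x2 y2 \<in> I"
    and ne: "(x1, y1) \<noteq> (x2, y2)"
    and n1: "\<not> ge (Suc m) x1 y1" and n2: "\<not> ge (Suc m) x2 y2"
  shows False
proof -
  let ?W = "I \<inter> Jideal (Suc m)"
  let ?e1 = "e_elem x1 y1 :: 'a \<Rightarrow> 'a \<Rightarrow> 'k"
  let ?e2 = "e_elem x2 y2 :: 'a \<Rightarrow> 'a \<Rightarrow> 'k"
  obtain B where B: "B \<subseteq> ?W" "V.independent B" "?W \<subseteq> V.span B" "card B = V.dim ?W"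
    by (rule V.basis_exists)
  have finB: "finite B" using F.finiteI_independent[OF B(2)] .
  have spB: "V.span B \<subseteq> S (Suc m)"
    using B(1) J_S[of m] by (intro V.span_minimal S_subspace) auto
  define Z1 where "Z1 = {g :: 'a \<Rightarrow> 'a \<Rightarrow> 'k. g x1 y1 = 0}"
  define Z2 where "Z2 = {g :: 'a \<Rightarrow> 'a \<Rightarrow> 'k. g x2 y2 = 0}"
  have Z1s: "V.subspace Z1" unfolding Z1_def V.subspace_def by (auto simp: inc_scale_def)
  have Z2s: "V.subspace Z2" unfolding Z2_def V.subspace_def by (auto simp: inc_scale_def)
  have SZ1: "S (Suc m) \<subseteq> Z1" using n1 unfolding S_def Z1_def by auto
  have SZ2: "S (Suc m) \<subseteq> Z2" using n2 unfolding S_def Z2_def by auto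
  have e2Z1: "?e2 \<in> Z1" using ne unfolding Z1_def e_elem_def by auto
  have e1Z1: "?e1 \<notin> Z1" unfolding Z1_def e_elem_def by auto
  have e2Z2: "?e2 \<notin> Z2" unfolding Z2_def e_elem_def by auto
  have sp1: "V.span (insert ?e2 B) \<subseteq> Z1"
    using e2Z1 spB SZ1 V.span_superset[of B] by (intro V.span_minimal Z1s) auto
  have e2B: "?e2 \<notin> V.span B" using spB SZ2 e2Z2 by auto
  have e1B: "?e1 \<notin> V.span (insert ?e2 B)" using sp1 e1Z1 by auto
  have ind: "V.independent (insert ?e1 (insert ?e2 B))"
    by (intro V.independent_insertI e1B e2B B(2))
  have "?e1 \<notin> insert ?e2 B" using e1B V.span_superset by blast
  moreover have "?e2 \<notin> B" using e2B V.span_superset by blast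
  ultimately have card: "card (insert ?e1 (insert ?e2 B)) = card B + 2" using finB by simp
  have sub: "insert ?e1 (insert ?e2 B) \<subseteq> I" using e1 e2 B(1) by auto
  have "card (insert ?e1 (insert ?e2 B)) \<le> V.dim I" by (rule F.independent_card_le_dim[OF sub ind])
  then show False using card B(4) d unfolding kdim_def by simp
qed

lemma e_J_diff:
  assumes "ge (Suc m') x y" "\<not> ge (Suc (Suc m')) x y"
  shows "(e_elem x y :: 'a::{finite,order} \<Rightarrow> 'a \<Rightarrow> 'k::field) \<in> Jideal (Suc m') - Jideal (Suc (Suc m'))"
proof
  show "(e_elem x y :: 'a \<Rightarrow> 'a \<Rightarrow> 'k) \<in> Jideal (Suc m')" using e_in_J assms(1) by blast
  show "(e_elem x y :: 'a \<Rightarrow> 'a \<Rightarrow> 'k) \<notin> Jideal (Suc (Suc m'))"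
  proof
    assume "(e_elem x y :: 'a \<Rightarrow> 'a \<Rightarrow> 'k) \<in> Jideal (Suc (Suc m'))"
    then have "(e_elem x y :: 'a \<Rightarrow> 'a \<Rightarrow> 'k) \<in> S (Suc (Suc m'))" by (rule subsetD[OF J_S])
    then show False using assms(2) unfolding S_def e_elem_def by auto
  qed
qed

theorem proposition3p6:
  fixes I :: "('a::{finite,order} \<Rightarrow> 'a \<Rightarrow> 'k::field) set" and m :: nat
  assumes "poset_connected TYPE('a)"
    and "m \<ge> 1"
    and "is_inc_ideal I"
    and "I \<subseteq> Jideal m"
    and "kdim I = kdim (I \<inter> Jideal (Suc m)) + 1"
  shows "\<exists>!(x, y). x \<le> y \<and> e_elem x y \<in> Jideal m - Jideal (Suc m)
           \<and> (\<forall>f \<in> I - Jideal (Suc m). \<exists>j \<in> Jideal (Suc m). f = inc_scale (f x y) (e_elem x y) + j)"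
proof -
  obtain m' where m': "m = Suc m'" using assms(2) by (cases m) auto
  have II: "is_inc_ideal I" by fact
  have d: "kdim I = kdim (I \<inter> Jideal (Suc m)) + 1" by fact
  have ImS: "I \<subseteq> S m" using assms(4) J_S[of m'] m' by auto
  obtain f where f: "f \<in> I" "f \<notin> Jideal (Suc m)"
  proof -
    show ?thesis
    proof (rule ccontr)
      assume "\<not> ?thesis"
      then have "I \<inter> Jideal (Suc m) = I" using that by blast
      then show False using d by simp
    qed
  qed
  have "f \<notin> S (Suc m)" using f(2) S_in_J by blast
  then obtain x y where xy: "f x y \<noteq> 0" "\<not> ge (Suc m) x y" unfolding S_def by auto
  have gxy: "ge m x y" using xy(1) f(1) ImS unfolding S_def by auto
  have xley: "x \<le> y" using ge_le[OF gxy] .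
  have eI: "e_elem x y \<in> I" using key_e[OF II f(1) xley xy(1)] .
  have eJm: "(e_elem x y :: 'a \<Rightarrow> 'a \<Rightarrow> 'k) \<in> Jideal m" using e_in_J[of m' x y] gxy m' by simp
  have eJ: "(e_elem x y :: 'a \<Rightarrow> 'a \<Rightarrow> 'k) \<notin> Jideal (Suc m)"
  proof
    assume "(e_elem x y :: 'a \<Rightarrow> 'a \<Rightarrow> 'k) \<in> Jideal (Suc m)"
    then have "(e_elem x y :: 'a \<Rightarrow> 'a \<Rightarrow> 'k) \<in> S (Suc m)" by (rule subsetD[OF J_S])
    then show False using xy(2) unfolding S_def e_elem_def by auto
  qed
  have uniq: "(u, v) = (x, y)" if "e_elem u v \<in> I" "\<not> ge (Suc m) u v" for u v
    using dim_contra[OF II d that(1) eI _ that(2) xy(2)] by blast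
  have rep: "\<exists>j \<in> Jideal (Suc m). g = inc_scale (g x y) (e_elem x y) + j" if g: "g \<in> I - Jideal (Suc m)" for g
  proof -
    define j where "j = g - inc_scale (g x y) (e_elem x y)"
    have "j \<in> S (Suc m)" unfolding S_def
    proof (clarify)
      fix u v assume nz: "j u v \<noteq> 0"
      show "ge (Suc m) u v"
      proof (cases "(u, v) = (x, y)")
        case True then show ?thesis using nz by (auto simp: j_def inc_scale_def e_elem_def)
      next
        case False
        then have guv: "g u v \<noteq> 0" using nz by (auto simp: j_def inc_scale_def e_elem_def)
        then have "ge m u v" using g ImS unfolding S_def by auto
        then have "u \<le> v" by (rule ge_le)
        show ?thesis
        proof (rule ccontr)
          assume "\<not> ge (Suc m) u v"
          moreover have "e_elem u v \<in> I" using key_e[of I g u v] II \<open>u \<le> v\<close> guv g by blast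
          ultimately show False using uniq False by blast
        qed
      qed
    qed
    then have "j \<in> Jideal (Suc m)" by (rule S_in_J)
    moreover have "g = inc_scale (g x y) (e_elem x y) + j" unfolding j_def by simp
    ultimately show ?thesis by blast
  qed
  show ?thesis
  proof (rule ex1I[where a = "(x, y)"])
    show "case (x, y) of (x, y) \<Rightarrow> x \<le> y \<and> e_elem x y \<in> Jideal m - Jideal (Suc m)
           \<and> (\<forall>f \<in> I - Jideal (Suc m). \<exists>j \<in> Jideal (Suc m). f = inc_scale (f x y) (e_elem x y) + j)"
      using xley e_J_diff[of m' x y] gxy xy(2) m' rep by auto
  next
    fix p
    assume "case p of (x, y) \<Rightarrow> x \<le> y \<and> e_elem x y \<in> Jideal m - Jideal (Suc m)
           \<and> (\<forall>f \<in> I - Jideal (Suc m). \<exists>j \<in> Jideal (Suc m). f = inc_scale (f x y) (e_elem x y) + j)"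
    moreover obtain x' y' where p: "p = (x', y')" by (cases p)
    ultimately have "\<exists>j \<in> Jideal (Suc m). (e_elem x y :: 'a \<Rightarrow> 'a \<Rightarrow> 'k) = inc_scale (e_elem x y x' y') (e_elem x' y') + j"
      using eI eJ by auto
    then obtain j where j: "j \<in> Jideal (Suc m)" "(e_elem x y :: 'a \<Rightarrow> 'a \<Rightarrow> 'k) = inc_scale (e_elem x y x' y') (e_elem x' y') + j" by blast
    show "p = (x, y)"
    proof (rule ccontr)
      assume "p \<noteq> (x, y)"
      then have "e_elem x y x' y' = (0::'k)" using p unfolding e_elem_def by auto
      then have "(e_elem x y :: 'a \<Rightarrow> 'a \<Rightarrow> 'k) = j" using j(2) by (simp add: inc_scale_def fun_eq_iff)
      then show False using j(1) eJ by simp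
    qed
  qed
qed

end
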